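(* Let $\nu>0$, $0<K<\nu^2/2$, and let $(\Phi_m)$ satisfy the standing assumptions in the context. Then $$Q(K):=\sup_{W\in\mathcal{C}_K}\mathcal{Q}(W)=\sum_{m=1}^\infty\Phi_m''(\nu m)\,K\,m^2,$$ where $\mathcal{Q}(W):=\frac12\int_{\mathbb{R}}\sum_{m=1}^\infty\Phi_m''(\nu m)\,(A_mW(s))^2\,ds$.
   Context: $A_m f(\xi):=\int_{-m/2}^{m/2} f(\xi+s)\,ds$. $\mathcal{C}$ is the $\mathsf{L}^2(\mathbb{R})$-closure of $\{W\in C_c^\infty(\mathbb{R}): W(x)=W(-x)\ge0,\ \dot W(x)=-\dot W(-x)\le0\ \forall x\ge0\}$; $\mathcal{C}_K:=\{W\in\mathcal{C}:\frac12\|W\|_2^2=K\}$. Standing assumptions: for every $m$, $\Phi_m:[0,\infty)\to[0,\infty)$, $\Phi_m\in C^4([0,\infty))$, $\Phi_m\ge0,\Phi_m'\le0,\Phi_m''\ge0,\Phi_m'''\le0,\Phi_m^{(4)}\ge0$ (strict for $m=1$, $s>0$); and for a fixed $\gamma\in(5/2,3)$ the series $\sum_m\Phi_m'(\nu m-\sqrt{2Km})m$, $\sum_m\Phi_m''(\nu m-\sqrt{2Km})m^2$, $\sum_m\Phi_m''(\nu m)m^\gamma$, $\sum_m\Phi_m'''(\nu m-\sqrt{2Km})m^{3/2}$ are finite. *)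

theory Defs
  imports "HOL-Analysis.Analysis"
begin

definition smooth_cc :: "(real \<Rightarrow> real) \<Rightarrow> bool" where
  "smooth_cc W \<longleftrightarrow>
     (\<exists>D::nat \<Rightarrow> real \<Rightarrow> real. D 0 = W \<and> (\<forall>k x. (D k has_real_derivative D (Suc k) x) (at x)))
   \<and> (\<exists>R. \<forall>x. R < \<bar>x\<bar> \<longrightarrow> W x = 0)"

definition C0 :: "(real \<Rightarrow> real) \<Rightarrow> bool" where
  "C0 W \<longleftrightarrow> smooth_cc W \<and>
     (\<forall>x\<ge>0. W x = W (-x) \<and> W x \<ge> 0 \<and> deriv W x = - deriv W (-x) \<and> deriv W x \<le> 0)"

text \<open>L2-closure of the generating set (functions representing L2 classes).\<close>
definition Ccl :: "(real \<Rightarrow> real) \<Rightarrow> bool" where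
  "Ccl f \<longleftrightarrow> f \<in> borel_measurable lborel \<and> integrable lborel (\<lambda>x. (f x)\<^sup>2) \<and>
     (\<exists>Ws. (\<forall>n. C0 (Ws n)) \<and>
        (\<lambda>n. LINT x|lborel. (f x - Ws n x)\<^sup>2) \<longlonglongrightarrow> 0)"

definition CK :: "real \<Rightarrow> (real \<Rightarrow> real) \<Rightarrow> bool" where
  "CK K W \<longleftrightarrow> Ccl W \<and> (1/2) * (LINT x|lborel. (W x)\<^sup>2) = K"

definition Aop :: "nat \<Rightarrow> (real \<Rightarrow> real) \<Rightarrow> real \<Rightarrow> real" where
  "Aop m f \<xi> = (LBINT s=-(real m)/2..(real m)/2. f (\<xi> + s))"

text \<open>The functional Q(W) = 1/2 int sum_{m>=1} Phi_m''(nu m) (A_m W(s))^2 ds,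
  computed in [0,oo] (the integrand is nonnegative). Phi2 m = Phi_m''.\<close>
definition Qfun :: "real \<Rightarrow> (nat \<Rightarrow> real \<Rightarrow> real) \<Rightarrow> (real \<Rightarrow> real) \<Rightarrow> ennreal" where
  "Qfun \<nu> Phi2 W = ennreal (1/2) *
     (\<integral>\<^sup>+ s. (\<Sum>m. ennreal (Phi2 (Suc m) (\<nu> * real (Suc m)) * (Aop (Suc m) W s)\<^sup>2)) \<partial>lborel)"

end

theory Submission imports Defs "HOL-Computational_Algebra.Polynomial" "HOL-Real_Asymp.Real_Asymp" begin

fun Pn :: "nat \<Rightarrow> (real \<Rightarrow> real) \<Rightarrow> bool" where
  "Pn 0 f = True"
| "Pn (Suc n) f = ((\<forall>x. (f has_real_derivative deriv f x) (at x)) \<and> Pn n (deriv f))"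

lemma Pn_mono: "Pn (Suc n) f \<Longrightarrow> Pn n f"
proof (induction n arbitrary: f)
  case 0 then show ?case by simp
next
  case (Suc n) then show ?case by simp
qed


lemma deriv_eqI: "(\<And>x. (f has_real_derivative f' x) (at x)) \<Longrightarrow> deriv f = f'"
  using DERIV_imp_deriv by blast

lemma Pn_SucI: "(\<And>x. (f has_real_derivative f' x) (at x)) \<Longrightarrow> Pn n f' \<Longrightarrow> Pn (Suc n) f"
  using deriv_eqI[of f f'] by auto

lemma Pn_const: "Pn n (\<lambda>x. c)"
proof (induction n arbitrary: c)
  case (Suc n) show ?case by (rule Pn_SucI[where f'="\<lambda>x. 0"]) (auto intro: Suc)
qed simp

lemma Pn_id: "Pn n (\<lambda>x. x)"
proof (cases n)
  case (Suc k) show ?thesis unfolding Suc by (rule Pn_SucI[where f'="\<lambda>x. 1"]) (auto intro: Pn_const)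
qed simp

lemma Pn_add: "Pn n f \<Longrightarrow> Pn n g \<Longrightarrow> Pn n (\<lambda>x. f x + g x)"
proof (induction n arbitrary: f g)
  case (Suc n)
  show ?case
    by (rule Pn_SucI[where f'="\<lambda>x. deriv f x + deriv g x"])
       (use Suc in \<open>auto intro!: derivative_eq_intros\<close>)
qed simp

lemma Pn_mult: "Pn n f \<Longrightarrow> Pn n g \<Longrightarrow> Pn n (\<lambda>x. f x * g x)"
proof (induction n arbitrary: f g)
  case (Suc n)
  have "Pn n (\<lambda>x. deriv f x * g x + f x * deriv g x)"
    using Suc Pn_mono[OF Suc.prems(1)] Pn_mono[OF Suc.prems(2)] by (intro Pn_add Suc.IH) auto
  then show ?case
    by (intro Pn_SucI[where f'="\<lambda>x. deriv f x * g x + f x * deriv g x"])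
       (use Suc in \<open>auto intro!: derivative_eq_intros\<close>)
qed simp

lemma Pn_comp: assumes k: "\<And>n. Pn n k" shows "Pn n f \<Longrightarrow> Pn n (\<lambda>x. f (k x))"
proof (induction n arbitrary: f)
  case (Suc n)
  have kd: "\<And>x. (k has_real_derivative deriv k x) (at x)" using k[of 1] by simp
  have "Pn n (deriv k)" using k[of "Suc n"] by simp
  then have "Pn n (\<lambda>x. deriv f (k x) * deriv k x)"
    using Suc by (intro Pn_mult Suc.IH Pn_const) auto
  moreover have "\<And>x. ((\<lambda>x. f (k x)) has_real_derivative deriv f (k x) * deriv k x) (at x)"
    using Suc.prems kd by (auto intro!: DERIV_chain2[of f])
  ultimately show ?case by (intro Pn_SucI) auto
qed simp

lemma Pn_inv: "(\<And>x. h x \<noteq> 0) \<Longrightarrow> Pn n h \<Longrightarrow> Pn n (\<lambda>x. 1 / h x)"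
proof (induction n arbitrary: h)
  case (Suc n)
  have "Pn n (\<lambda>x. (-1) * deriv h x)" using Suc.prems by (intro Pn_mult Pn_const) auto
  then have "Pn n (\<lambda>x. ((-1) * deriv h x) * ((1 / h x) * (1 / h x)))"
    using Suc Pn_mono[OF Suc.prems(2)] by (intro Pn_mult Suc.IH Pn_const) auto
  then have "Pn n (\<lambda>x. (- deriv h x) * ((1 / h x) * (1 / h x)))" by simp
  moreover have "\<And>x. ((\<lambda>x. 1 / h x) has_real_derivative (- deriv h x) * ((1 / h x) * (1 / h x))) (at x)"
    using Suc.prems by (auto intro!: derivative_eq_intros simp: power2_eq_square field_simps)
  ultimately show ?case by (intro Pn_SucI) auto
qed simp

lemma poly_exp_lim: "((\<lambda>z::real. poly (p::real poly) z * exp (- z)) \<longlongrightarrow> 0) at_top"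
proof -
  have "((\<lambda>z. \<Sum>i\<le>degree p. coeff p i * (z ^ i / exp z)) \<longlongrightarrow> (\<Sum>i\<le>degree p. coeff p i * 0)) at_top"
    by (intro tendsto_sum tendsto_mult tendsto_const tendsto_power_div_exp_0)
  then show ?thesis
    by (simp add: poly_altdef sum_divide_distrib exp_minus field_simps)
qed

definition Eq :: "real poly \<Rightarrow> real \<Rightarrow> real" where
  "Eq q x = (if x > 0 then poly q (1/x) * exp (- (1/x)) else 0)"

definition dq :: "real poly \<Rightarrow> real poly" where
  "dq q = monom 1 2 * (q - pderiv q)"

lemma Eq_deriv: "(Eq q has_real_derivative Eq (dq q) x) (at x)"
proof (cases "x > 0")
  case True
  have "((\<lambda>x. poly q (1/x) * exp (- (1/x))) has_real_derivative Eq (dq q) x) (at x)"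
    using True
    by (auto intro!: derivative_eq_intros simp: Eq_def dq_def poly_monom field_simps power2_eq_square)
  then show ?thesis
    by (rule has_field_derivative_transform_within_open[where S="{0<..}"]) (use True in \<open>auto simp: Eq_def\<close>)
next
  case False
  show ?thesis
  proof (cases "x < 0")
    case True
    have "((\<lambda>x. 0) has_real_derivative Eq (dq q) x) (at x)"
      using True by (auto intro!: derivative_eq_intros simp: Eq_def)
    then show ?thesis
      by (rule has_field_derivative_transform_within_open[where S="{..<0}"]) (use True in \<open>auto simp: Eq_def\<close>)
  next
    case False
    with \<open>\<not> x > 0\<close> have x0: "x = 0" by simp
    have R: "((\<lambda>y. (Eq q y - Eq q 0) / (y - 0)) \<longlongrightarrow> 0) (at_right 0)"
    proof -
      have "((\<lambda>z. poly (pCons 0 q) z * exp (- z)) \<longlongrightarrow> 0) at_top" by (rule poly_exp_lim)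
      then have "((\<lambda>z. (Eq q (inverse z) - Eq q 0) / (inverse z - 0)) \<longlongrightarrow> 0) at_top"
        apply (rule tendsto_cong[THEN iffD1, rotated])
        using eventually_gt_at_top[of 0]
        by eventually_elim (auto simp: Eq_def field_simps)
      then show ?thesis by (simp add: filterlim_at_right_to_top)
    qed
    have L: "((\<lambda>y. (Eq q y - Eq q 0) / (y - 0)) \<longlongrightarrow> 0) (at_left 0)"
      by (rule tendsto_eventually) (auto simp: Eq_def eventually_at_left_field intro!: exI[of _ "-1"])
    have "((\<lambda>y. (Eq q y - Eq q 0) / (y - 0)) \<longlongrightarrow> 0) (at 0)"
      using L R by (rule filterlim_split_at)
    then show ?thesis unfolding x0 has_field_derivative_iff by (simp add: Eq_def)
  qed
qed

lemma Pn_Eq: "Pn n (Eq q)"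
proof (induction n arbitrary: q)
  case (Suc n) show ?case by (rule Pn_SucI[OF Eq_deriv Suc])
qed simp

lemma Pn_smooth: "Pn (k + n) f \<Longrightarrow> Pn n ((deriv ^^ k) f)"
proof (induction k arbitrary: n)
  case (Suc k)
  have "Pn (Suc n) ((deriv ^^ k) f)" using Suc.IH[of "Suc n"] Suc.prems by simp
  then show ?case by simp
qed simp

lemma smooth_from_Pn: assumes "\<And>n. Pn n f"
  shows "\<exists>D::nat \<Rightarrow> real \<Rightarrow> real. D 0 = f \<and> (\<forall>k x. (D k has_real_derivative D (Suc k) x) (at x))"
proof (intro exI[of _ "\<lambda>k. (deriv ^^ k) f"] conjI allI)
  fix k x
  have "Pn (Suc 0) ((deriv ^^ k) f)" using Pn_smooth[of k "Suc 0" f] assms by simp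
  then show "((deriv ^^ k) f has_real_derivative (deriv ^^ Suc k) f x) (at x)" by simp
qed simp

definition E :: "real \<Rightarrow> real" where "E x = Eq 1 x"

lemma E_simp: "E x = (if x > 0 then exp (- (1/x)) else 0)"
  by (simp add: E_def Eq_def)

lemma Pn_E: "Pn n E"
proof -
  have "E = Eq 1" by (simp add: fun_eq_iff E_def)
  show ?thesis unfolding \<open>E = Eq 1\<close> by (rule Pn_Eq)
qed

lemma E_pos: "x > 0 \<Longrightarrow> E x > 0" by (simp add: E_simp)
lemma E_nonneg: "E x \<ge> 0" by (simp add: E_simp)
lemma E_zero: "x \<le> 0 \<Longrightarrow> E x = 0" by (simp add: E_simp)
lemma E_mono: "x \<le> y \<Longrightarrow> E x \<le> E y"
  by (auto simp: E_simp divide_simps)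

definition g :: "real \<Rightarrow> real" where "g t = E t * (1 / (E t + E (1 - t)))"

lemma g_den: "E t + E (1 - t) > 0"
proof (cases "t > 0")
  case True then show ?thesis using E_pos[of t] E_nonneg[of "1-t"] by simp
next
  case False then show ?thesis using E_pos[of "1-t"] E_nonneg[of t] by simp
qed

lemma Pn_g: "Pn n g"
proof -
  have l: "\<And>n. Pn n (\<lambda>t. 1 + (-1) * t)" by (intro Pn_add Pn_mult Pn_const Pn_id)
  have "Pn n (\<lambda>t. E (1 + (-1) * t))" by (rule Pn_comp[OF l Pn_E])
  then have "Pn n (\<lambda>t. E (1 - t))" by simp
  then have "Pn n (\<lambda>t. E t * (1 / (E t + E (1 - t))))"
    using g_den by (intro Pn_mult Pn_E Pn_inv Pn_add) (auto simp: less_le)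
  then show ?thesis by (simp add: g_def[abs_def])
qed

lemma g_zero: "t \<le> 0 \<Longrightarrow> g t = 0" by (simp add: g_def E_zero)
lemma g_one: "t \<ge> 1 \<Longrightarrow> g t = 1" using g_den[of t] by (simp add: g_def E_zero)
lemma g_nonneg: "g t \<ge> 0" using g_den[of t] E_nonneg[of t] by (simp add: g_def)
lemma g_le1: "g t \<le> 1" using g_den[of t] E_nonneg[of t] E_nonneg[of "1-t"] by (simp add: g_def)
lemma g_mono: assumes "t \<le> t'" shows "g t \<le> g t'"
proof -
  have a: "E t \<le> E t'" "E (1 - t') \<le> E (1 - t)" using assms by (auto intro: E_mono)
  have "E t * (E t' + E (1 - t')) \<le> E t' * (E t + E (1 - t))"
    using a E_nonneg[of t] E_nonneg[of t'] E_nonneg[of "1-t"] E_nonneg[of "1-t'"]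
    by (simp add: algebra_simps mult_mono)
  then show ?thesis using g_den[of t] g_den[of t']
    by (simp add: g_def divide_simps)
qed

definition psi :: "real \<Rightarrow> real \<Rightarrow> real" where "psi L x = g (L + 1 - x) * g (L + 1 + x)"

lemma Pn_psi: "Pn n (\<lambda>x. h * psi L x)"
proof -
  have l1: "\<And>n. Pn n (\<lambda>x. (L + 1) + (-1) * x)" by (intro Pn_add Pn_mult Pn_const Pn_id)
  have l2: "\<And>n. Pn n (\<lambda>x. (L + 1) + x)" by (intro Pn_add Pn_const Pn_id)
  have "Pn n (\<lambda>x. h * (g ((L + 1) + (-1) * x) * g ((L + 1) + x)))"
    by (intro Pn_mult Pn_const Pn_comp[OF l1 Pn_g] Pn_comp[OF l2 Pn_g])
  then show ?thesis by (simp add: psi_def)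
qed

lemma psi_even: "psi L (- x) = psi L x" by (simp add: psi_def)
lemma psi_pos_side: "L \<ge> 0 \<Longrightarrow> x \<ge> 0 \<Longrightarrow> psi L x = g (L + 1 - x)"
  by (simp add: psi_def g_one)
lemma psi_abs: "L \<ge> 0 \<Longrightarrow> psi L x = g (L + 1 - \<bar>x\<bar>)"
proof (cases "x \<ge> 0")
  case True then show "L \<ge> 0 \<Longrightarrow> ?thesis" by (simp add: psi_pos_side)
next
  case False then show "L \<ge> 0 \<Longrightarrow> ?thesis" using psi_pos_side[of L "-x"] psi_even[of L x] by simp
qed
lemma psi_one: "L \<ge> 0 \<Longrightarrow> \<bar>x\<bar> \<le> L \<Longrightarrow> psi L x = 1" by (simp add: psi_abs g_one)
lemma psi_zero: "L \<ge> 0 \<Longrightarrow> \<bar>x\<bar> \<ge> L + 1 \<Longrightarrow> psi L x = 0" by (simp add: psi_abs g_zero)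
lemma psi_nonneg: "psi L x \<ge> 0" by (simp add: psi_def g_nonneg)
lemma psi_le1: "psi L x \<le> 1" unfolding psi_def using g_nonneg g_le1 by (intro mult_le_one) auto
lemma psi_antimono: "L \<ge> 0 \<Longrightarrow> 0 \<le> x \<Longrightarrow> x \<le> y \<Longrightarrow> psi L y \<le> psi L x"
  by (simp add: psi_pos_side g_mono)

lemma deriv_even: assumes ev: "\<And>y. f (- y) = f y" and d: "(f has_real_derivative D) (at x)"
  shows "deriv f (- x) = - D"
proof -
  have "((\<lambda>y. f (- y)) has_real_derivative D * (-1)) (at (- x))"
  proof -
    have "((\<lambda>y. - y) has_real_derivative -1) (at (- x))" by (auto intro!: derivative_eq_intros)
    from DERIV_chain2[where f=f and g="\<lambda>y. - y" and x="- x" and Da=D, OF _ this] d show ?thesis by simp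
  qed
  then have "(f has_real_derivative - D) (at (- x))" using ev by simp
  then show ?thesis by (rule DERIV_imp_deriv)
qed

lemma deriv_nonpos: assumes d: "(f has_real_derivative D) (at x)" and m: "\<And>y. y \<ge> x \<Longrightarrow> f y \<le> f x"
  shows "D \<le> 0"
proof (rule ccontr)
  assume "\<not> D \<le> 0"
  then obtain d where "d > 0" "\<forall>h>0. h < d \<longrightarrow> f x < f (x + h)" using DERIV_pos_inc_right[OF d] by auto
  then have "f x < f (x + d/2)" by auto
  with m[of "x + d/2"] \<open>d > 0\<close> show False by auto
qed

lemma C0_psi: assumes L: "L \<ge> 0" and h: "h \<ge> 0" shows "C0 (\<lambda>x. h * psi L x)"
proof -
  let ?W = "\<lambda>x. h * psi L x"
  have Pn: "\<And>n. Pn n ?W" by (rule Pn_psi)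
  have dW: "\<And>x. (?W has_real_derivative deriv ?W x) (at x)" using Pn[of 1] by simp
  have sm: "smooth_cc ?W"
    unfolding smooth_cc_def
    using smooth_from_Pn[OF Pn] psi_zero[OF L] by (auto intro!: exI[of _ "L + 1"])
  have "deriv ?W x = - deriv ?W (- x)" if "x \<ge> 0" for x
    using deriv_even[of ?W "deriv ?W x" x, OF _ dW] psi_even by simp
  moreover have "deriv ?W x \<le> 0" if "x \<ge> 0" for x
    using deriv_nonpos[OF dW] psi_antimono[OF L that] h by (simp add: mult_left_mono)
  ultimately show ?thesis unfolding C0_def using sm psi_even psi_nonneg h by auto
qed

lemma psi_cont: "continuous_on UNIV (psi L)"
proof -
  have "\<And>x. ((\<lambda>x. 1 * psi L x) has_real_derivative deriv (\<lambda>x. 1 * psi L x) x) (at x)"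
    using Pn_psi[of 1 1 L] by simp
  then have "\<And>x. isCont (psi L) x" using DERIV_isCont by force
  then show ?thesis by (simp add: continuous_at_imp_continuous_on)
qed

lemma psi_sq_eq: assumes L: "L \<ge> 0" shows "(h * psi L x)\<^sup>2 = indicator {-(L+1)..L+1} x *\<^sub>R (h * psi L x)\<^sup>2"
proof (cases "x \<in> {-(L+1)..L+1}")
  case False then have "\<bar>x\<bar> \<ge> L + 1" by auto
  then show ?thesis using psi_zero[OF L] by simp
qed simp

lemma psi_sq_int: assumes "L \<ge> 0" shows "integrable lborel (\<lambda>x. (h * psi L x)\<^sup>2)"
proof -
  have "integrable lborel (\<lambda>x. indicator {-(L+1)..L+1} x *\<^sub>R (h * psi L x)\<^sup>2)"
    by (intro borel_integrable_compact continuous_intros continuous_on_compose2[OF psi_cont]) auto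
  moreover have "(\<lambda>x. (h * psi L x)\<^sup>2) = (\<lambda>x. indicator {-(L+1)..L+1} x *\<^sub>R (h * psi L x)\<^sup>2)"
    by (rule ext, rule psi_sq_eq[OF assms])
  ultimately show ?thesis by simp
qed

lemma psi_meas: "(\<lambda>x. h * psi L x) \<in> borel_measurable lborel"
proof -
  have "continuous_on UNIV (\<lambda>x. h * psi L x)"
    by (intro continuous_intros continuous_on_compose2[OF psi_cont]) auto
  then show ?thesis by (simp add: borel_measurable_continuous_onI measurable_lborel2)
qed

lemma psi_int_bounds: assumes L: "L \<ge> 0"
  shows "2 * L \<le> (LINT x|lborel. (psi L x)\<^sup>2)" "(LINT x|lborel. (psi L x)\<^sup>2) \<le> 2 * L + 2"
proof -
  have i: "integrable lborel (\<lambda>x. (1 * psi L x)\<^sup>2)" by (rule psi_sq_int[OF L])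
  have "(LINT x|lborel. indicator {-L..L} x) \<le> (LINT x|lborel. (psi L x)\<^sup>2)"
  proof (intro integral_mono)
    show "integrable lborel (\<lambda>x. (psi L x)\<^sup>2)" using i by simp
    show "integrable lborel (\<lambda>x. indicat_real {-L..L} x)"
      by (rule integrable_real_indicator) (auto simp: emeasure_lborel_Icc_eq)
    fix x show "indicat_real {-L..L} x \<le> (psi L x)\<^sup>2"
      using psi_one[OF L, of x] by (auto simp: indicator_def)
  qed
  moreover have "(LINT x|lborel. indicator {-L..L} x) = 2 * L" using L by simp
  ultimately show "2 * L \<le> (LINT x|lborel. (psi L x)\<^sup>2)" by simp
  have "(LINT x|lborel. (psi L x)\<^sup>2) \<le> (LINT x|lborel. indicator {-(L+1)..L+1} x)"
  proof (intro integral_mono)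
    show "integrable lborel (\<lambda>x. (psi L x)\<^sup>2)" using i by simp
    show "integrable lborel (\<lambda>x. indicat_real {- (L + 1)..L + 1} x)"
      by (rule integrable_real_indicator) (auto simp: emeasure_lborel_Icc_eq)
    fix x show "(psi L x)\<^sup>2 \<le> indicat_real {- (L + 1)..L + 1} x"
      using psi_zero[OF L, of x] psi_le1[of L x] psi_nonneg[of L x]
      by (auto simp: indicator_def abs_if power_le_one)
  qed
  moreover have "(LINT x|lborel. indicator {-(L+1)..L+1} x) = 2 * L + 2"
    unfolding integral_indicator using L by (simp add: measure_lborel_Icc)
  ultimately show "(LINT x|lborel. (psi L x)\<^sup>2) \<le> 2 * L + 2" by simp
qed

lemma Aop_plateau: assumes L: "L \<ge> 0" and M: "real m > 0" and s: "\<bar>s\<bar> \<le> L - real m / 2"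
  shows "Aop m (\<lambda>x. h * psi L x) s = h * real m"
proof -
  let ?I = "{-(real m)/2<..<real m/2}"
  have "Aop m (\<lambda>x. h * psi L x) s = (LINT t|lborel. indicator ?I t *\<^sub>R (h * psi L (s + t)))"
    unfolding Aop_def interval_lebesgue_integral_def set_lebesgue_integral_def
    using M by (simp add: einterval_eq_Icc)
  also have "\<dots> = (LINT t|lborel. h * indicator ?I t)"
  proof (intro Bochner_Integration.integral_cong refl)
    fix t
    have "t \<in> ?I \<Longrightarrow> \<bar>s + t\<bar> \<le> L" using s by auto
    then show "indicator ?I t *\<^sub>R (h * psi L (s + t)) = h * indicator ?I t"
      using psi_one[OF L, of "s + t"] by (auto simp: indicator_def)
  qed
  also have "\<dots> = h * real m" using M by simp
  finally show ?thesis .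
qed

lemma shift_meas: assumes "W \<in> borel_measurable lborel" shows "(\<lambda>t. W (s + t)) \<in> borel_measurable lborel"
proof -
  have W: "W \<in> borel_measurable borel" using assms by (simp add: measurable_lborel2)
  have "(\<lambda>t. s + t) \<in> borel \<rightarrow>\<^sub>M borel" by (intro borel_measurable_continuous_onI continuous_intros)
  from measurable_compose[OF this W] show ?thesis by (simp add: measurable_lborel2)
qed

lemma abs_le_sq: "\<bar>y::real\<bar> \<le> 1 + y\<^sup>2"
proof -
  have "0 \<le> (\<bar>y\<bar> - 1/2)\<^sup>2" by simp
  also have "\<dots> = y\<^sup>2 - \<bar>y\<bar> + 1/4" by (simp add: power2_eq_square algebra_simps)
  finally show ?thesis by simp
qed

lemma Aop_CS:
  assumes Wm: "W \<in> borel_measurable lborel" and M: "real m > 0"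
  shows "ennreal ((Aop m W s)\<^sup>2) \<le> ennreal (real m) *
     (\<integral>\<^sup>+ t. ennreal (indicator {-(real m)/2<..<real m/2} t * (W (s + t))\<^sup>2) \<partial>lborel)"
proof -
  let ?I = "{-(real m)/2<..<real m/2}"
  define g where "g t = indicator ?I t * W (s + t)" for t
  have gm: "g \<in> borel_measurable lborel" unfolding g_def using shift_meas[OF Wm] by measurable
  have A: "Aop m W s = (LINT t|lborel. g t)"
    unfolding Aop_def interval_lebesgue_integral_def set_lebesgue_integral_def g_def
    using M by (simp add: einterval_eq_Icc)
  have g2: "\<And>t. indicator ?I t * (W (s + t))\<^sup>2 = (g t)\<^sup>2"
    by (simp add: g_def indicator_def)
  define N where "N = (\<integral>\<^sup>+ t. ennreal ((g t)\<^sup>2) \<partial>lborel)"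
  have Neq: "(\<integral>\<^sup>+ t. ennreal (indicator {-(real m)/2<..<real m/2} t * (W (s + t))\<^sup>2) \<partial>lborel) = N"
    unfolding N_def g2 ..
  have "ennreal ((Aop m W s)\<^sup>2) \<le> ennreal (real m) * N"
  proof (cases "N = \<infinity>")
    case True then show ?thesis using M by (simp add: ennreal_mult_top)
  next
    case False
    then obtain r where r: "N = ennreal r" "r \<ge> 0" by (cases N) auto
    have ig2: "integrable lborel (\<lambda>t. (g t)\<^sup>2)"
      using r gm unfolding N_def by (intro integrableI_nn_integral_finite[where x=r]) auto
    have Nr: "N = ennreal (LINT t|lborel. (g t)\<^sup>2)"
      unfolding N_def using ig2 by (intro nn_integral_eq_integral) auto
    have iI: "integrable lborel (indicat_real ?I)"
      by (rule integrable_real_indicator) (use M in auto)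
    have ig: "integrable lborel g"
    proof (rule Bochner_Integration.integrable_bound[OF Bochner_Integration.integrable_add[OF iI ig2] gm])
      show "AE x in lborel. norm (g x) \<le> norm (indicat_real ?I x + (g x)\<^sup>2)"
      proof (intro AE_I2)
        fix x
        have "\<bar>W (s + x)\<bar> \<le> 1 + (W (s + x))\<^sup>2" by (rule abs_le_sq)
        then show "norm (g x) \<le> norm (indicat_real ?I x + (g x)\<^sup>2)"
          by (auto simp: g_def indicator_def)
      qed
    qed
    define a where "a = (LINT t|lborel. g t) / real m"
    have mI: "measure lborel ?I = real m" using M by simp
    have eq: "(\<lambda>t. (g t - a * indicator ?I t)\<^sup>2) = (\<lambda>t. (g t)\<^sup>2 - (2 * a) * g t + a\<^sup>2 * indicator ?I t)"
      by (rule ext) (simp add: g_def indicator_def power2_eq_square algebra_simps)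
    have "0 \<le> (LINT t|lborel. (g t - a * indicator ?I t)\<^sup>2)" by simp
    also have "\<dots> = (LINT t|lborel. (g t)\<^sup>2) - (2 * a) * (LINT t|lborel. g t) + a\<^sup>2 * real m"
      unfolding eq using ig ig2 iI mI
      by (simp add: integral_diff integral_add Bochner_Integration.integral_mult_right integrable_diff integrable_add)
    finally have "(LINT t|lborel. g t)\<^sup>2 \<le> real m * (LINT t|lborel. (g t)\<^sup>2)"
      using M unfolding a_def by (simp add: field_simps power2_eq_square)
    then have "ennreal ((Aop m W s)\<^sup>2) \<le> ennreal (real m * (LINT t|lborel. (g t)\<^sup>2))"
      unfolding A by (rule ennreal_leI)
    also have "\<dots> = ennreal (real m) * N"
      unfolding Nr using M by (simp add: ennreal_mult)
    finally show ?thesis .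
  qed
  then show ?thesis by (simp only: Neq)
qed

lemma ennreal_ind_mult: "ennreal (indicator A x * y) = indicator A x * ennreal y"
  by (simp add: indicator_def)

lemma pair_meas:
  fixes W :: "real \<Rightarrow> real"
  assumes Wm: "W \<in> borel_measurable lborel" and that: "A \<in> sets borel"
  shows "(\<lambda>(s, t). ennreal (indicator A t * (W (s + t))\<^sup>2)) \<in> borel_measurable (lborel \<Otimes>\<^sub>M lborel)"
    and "(\<lambda>(t, s). ennreal (indicator A t * (W (s + t))\<^sup>2)) \<in> borel_measurable (lborel \<Otimes>\<^sub>M lborel)"
proof -
  have W: "W \<in> borel_measurable borel" using Wm by (simp add: measurable_lborel2)
  have p1: "(\<lambda>p. fst p + snd p) \<in> (lborel \<Otimes>\<^sub>M lborel) \<rightarrow>\<^sub>M borel" by measurable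
  have p2: "(\<lambda>p. W (fst p + snd p)) \<in> borel_measurable (lborel \<Otimes>\<^sub>M lborel)"
    by (rule measurable_compose[OF p1 W])
  have q1: "(\<lambda>p. snd p + fst p) \<in> (lborel \<Otimes>\<^sub>M lborel) \<rightarrow>\<^sub>M borel" by measurable
  have q2: "(\<lambda>p. W (snd p + fst p)) \<in> borel_measurable (lborel \<Otimes>\<^sub>M lborel)"
    by (rule measurable_compose[OF q1 W])
  have "(\<lambda>p. ennreal (indicator A (snd p) * (W (fst p + snd p))\<^sup>2)) \<in> borel_measurable (lborel \<Otimes>\<^sub>M lborel)"
    using p2 that by measurable
  then show "(\<lambda>(s, t). ennreal (indicator A t * (W (s + t))\<^sup>2)) \<in> borel_measurable (lborel \<Otimes>\<^sub>M lborel)"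
    by (simp add: case_prod_beta')
  have "(\<lambda>p. ennreal (indicator A (fst p) * (W (snd p + fst p))\<^sup>2)) \<in> borel_measurable (lborel \<Otimes>\<^sub>M lborel)"
    using q2 that by measurable
  then show "(\<lambda>(t, s). ennreal (indicator A t * (W (s + t))\<^sup>2)) \<in> borel_measurable (lborel \<Otimes>\<^sub>M lborel)"
    by (simp add: case_prod_beta')
qed

lemma sets_borel_Ioo: "{a<..<b::real} \<in> sets borel" by simp

lemma B_meas:
  fixes W :: "real \<Rightarrow> real" and a b :: real
  assumes Wm: "W \<in> borel_measurable lborel"
  shows "(\<lambda>s. \<integral>\<^sup>+ t. ennreal (indicator {a<..<b} t * (W (s + t))\<^sup>2) \<partial>lborel) \<in> borel_measurable lborel"
proof -
  have A: "{a<..<b::real} \<in> sets borel" by simp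
  show ?thesis using lborel.borel_measurable_nn_integral[OF pair_meas(1)[OF Wm A]] by simp
qed

lemma B_int:
  fixes W :: "real \<Rightarrow> real" and a b :: real
  assumes Wm: "W \<in> borel_measurable lborel" and iW: "integrable lborel (\<lambda>x. (W x)\<^sup>2)" and ab: "a \<le> b"
  shows "(\<integral>\<^sup>+ s. (\<integral>\<^sup>+ t. ennreal (indicator {a<..<b} t * (W (s + t))\<^sup>2) \<partial>lborel) \<partial>lborel)
     = ennreal (b - a) * ennreal (LINT x|lborel. (W x)\<^sup>2)"
proof -
  let ?I = "{a<..<b}"
  have W: "W \<in> borel_measurable borel" using Wm by (simp add: measurable_lborel2)
  have "(\<integral>\<^sup>+ s. (\<integral>\<^sup>+ t. ennreal (indicator ?I t * (W (s + t))\<^sup>2) \<partial>lborel) \<partial>lborel)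
      = (\<integral>\<^sup>+ t. (\<integral>\<^sup>+ s. ennreal (indicator ?I t * (W (s + t))\<^sup>2) \<partial>lborel) \<partial>lborel)"
    using lborel_pair.Fubini'[of "\<lambda>t s. ennreal (indicator ?I t * (W (s + t))\<^sup>2)"] pair_meas(2)[OF Wm, of ?I] sets_borel_Ioo
    by simp
  also have "\<dots> = (\<integral>\<^sup>+ t. indicator ?I t * ennreal (LINT x|lborel. (W x)\<^sup>2) \<partial>lborel)"
  proof (rule nn_integral_cong)
    fix t
    have m: "(\<lambda>s. ennreal ((W (s + t))\<^sup>2)) \<in> borel_measurable lborel"
      using shift_meas[OF Wm, of t] by (simp add: add.commute)
    have "(\<integral>\<^sup>+ x. ennreal ((W x)\<^sup>2) \<partial>lborel) = ennreal \<bar>1\<bar> * (\<integral>\<^sup>+ x. ennreal ((W (t + 1 * x))\<^sup>2) \<partial>lborel)"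
      by (rule nn_integral_real_affine) (use W in auto)
    then have "(\<integral>\<^sup>+ s. ennreal ((W (s + t))\<^sup>2) \<partial>lborel) = ennreal (LINT x|lborel. (W x)\<^sup>2)"
      using nn_integral_eq_integral[OF iW] by (simp add: add.commute)
    then show "(\<integral>\<^sup>+ s. ennreal (indicator ?I t * (W (s + t))\<^sup>2) \<partial>lborel) = indicator ?I t * ennreal (LINT x|lborel. (W x)\<^sup>2)"
      unfolding ennreal_ind_mult using m by (simp add: nn_integral_cmult)
  qed
  also have "\<dots> = ennreal (LINT x|lborel. (W x)\<^sup>2) * emeasure lborel ?I"
    using nn_integral_cmult_indicator[of ?I lborel "ennreal (LINT x|lborel. (W x)\<^sup>2)"]
    by (simp add: mult.commute)
  also have "\<dots> = ennreal (b - a) * ennreal (LINT x|lborel. (W x)\<^sup>2)"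
    using ab by (simp add: mult.commute)
  finally show ?thesis .
qed

lemma upper_bound:
  fixes W :: "real \<Rightarrow> real" and c :: "nat \<Rightarrow> real"
  assumes c: "\<And>m. c m \<ge> 0" and Wm: "W \<in> borel_measurable lborel"
    and iW: "integrable lborel (\<lambda>x. (W x)\<^sup>2)" and nW: "(LINT x|lborel. (W x)\<^sup>2) = 2 * K" and K: "K \<ge> 0"
  shows "ennreal (1/2) * (\<integral>\<^sup>+ s. (\<Sum>m. ennreal (c m * (Aop (Suc m) W s)\<^sup>2)) \<partial>lborel)
      \<le> (\<Sum>m. ennreal (c m * K * (real (Suc m))\<^sup>2))"
proof -
  define B where "B m s = (\<integral>\<^sup>+ t. ennreal (indicator {-(real (Suc m))/2<..<real (Suc m)/2} t * (W (s + t))\<^sup>2) \<partial>lborel)" for m s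
  have Bm: "\<And>m. B m \<in> borel_measurable lborel" unfolding B_def[abs_def] by (rule B_meas[OF Wm])
  have pw: "ennreal (c m * (Aop (Suc m) W s)\<^sup>2) \<le> ennreal (c m) * ennreal (real (Suc m)) * B m s" for m s
  proof -
    have "ennreal (c m * (Aop (Suc m) W s)\<^sup>2) = ennreal (c m) * ennreal ((Aop (Suc m) W s)\<^sup>2)"
      using c by (simp add: ennreal_mult)
    also have "\<dots> \<le> ennreal (c m) * (ennreal (real (Suc m)) * B m s)"
      unfolding B_def by (intro mult_left_mono Aop_CS[OF Wm]) auto
    finally show ?thesis by (simp add: mult.assoc)
  qed
  have "(\<integral>\<^sup>+ s. (\<Sum>m. ennreal (c m * (Aop (Suc m) W s)\<^sup>2)) \<partial>lborel)
      \<le> (\<integral>\<^sup>+ s. (\<Sum>m. ennreal (c m) * ennreal (real (Suc m)) * B m s) \<partial>lborel)"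
    by (intro nn_integral_mono suminf_le summableI pw)
  also have "\<dots> = (\<Sum>m. \<integral>\<^sup>+ s. ennreal (c m) * ennreal (real (Suc m)) * B m s \<partial>lborel)"
    using Bm by (intro nn_integral_suminf borel_measurable_times_ennreal borel_measurable_const) auto
  also have "\<dots> = (\<Sum>m. ennreal (c m) * ennreal (real (Suc m)) * (ennreal (real (Suc m)) * ennreal (2 * K)))"
  proof (intro suminf_cong)
    fix m
    have "(\<integral>\<^sup>+ s. B m s \<partial>lborel) = ennreal (real (Suc m)) * ennreal (2 * K)"
    proof -
      have "(\<integral>\<^sup>+ s. B m s \<partial>lborel) = ennreal (real (Suc m)/2 - (-(real (Suc m))/2)) * ennreal (LINT x|lborel. (W x)\<^sup>2)"
        unfolding B_def by (rule B_int[OF Wm iW]) simp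
      also have "real (Suc m)/2 - (-(real (Suc m))/2) = real (Suc m)" by (simp add: field_simps)
      finally show ?thesis unfolding nW .
    qed
    then show "(\<integral>\<^sup>+ s. ennreal (c m) * ennreal (real (Suc m)) * B m s \<partial>lborel) = ennreal (c m) * ennreal (real (Suc m)) * (ennreal (real (Suc m)) * ennreal (2 * K))"
      using Bm by (subst nn_integral_cmult) auto
  qed
  also have "\<dots> = (\<Sum>m. ennreal (c m * real (Suc m) * (real (Suc m) * (2 * K))))"
    using c K by (simp add: ennreal_mult)
  finally have "ennreal (1/2) * (\<integral>\<^sup>+ s. (\<Sum>m. ennreal (c m * (Aop (Suc m) W s)\<^sup>2)) \<partial>lborel)
      \<le> ennreal (1/2) * (\<Sum>m. ennreal (c m * real (Suc m) * (real (Suc m) * (2 * K))))"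
    by (rule mult_left_mono) simp
  also have "\<dots> = (\<Sum>m. ennreal (1/2) * ennreal (c m * real (Suc m) * (real (Suc m) * (2 * K))))"
    by (rule ennreal_suminf_cmult[symmetric])
  also have "\<dots> = (\<Sum>m. ennreal (c m * K * (real (Suc m))\<^sup>2))"
  proof (intro suminf_cong)
    fix m
    have "ennreal (1/2) * ennreal (c m * real (Suc m) * (real (Suc m) * (2 * K)))
        = ennreal (1/2 * (c m * real (Suc m) * (real (Suc m) * (2 * K))))"
      by (rule ennreal_mult[symmetric]) (use c K in auto)
    also have "1/2 * (c m * real (Suc m) * (real (Suc m) * (2 * K))) = c m * K * (real (Suc m))\<^sup>2"
      by (simp add: power2_eq_square algebra_simps)
    finally show "ennreal (1/2) * ennreal (c m * real (Suc m) * (real (Suc m) * (2 * K))) = ennreal (c m * K * (real (Suc m))\<^sup>2)" .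
  qed
  finally show ?thesis .
qed

lemma lower_W:
  fixes c :: "nat \<Rightarrow> real" and K L :: real and N :: nat
  assumes c: "\<And>m. c m \<ge> 0" and K: "K > 0" and N: "N \<ge> 1" and NL: "real N \<le> L"
  shows "\<exists>W. CK K W \<and> ennreal (K * (\<Sum>m<N. c m * (real (Suc m))\<^sup>2) * ((2 * L - real N) / (2 * L + 2)))
     \<le> ennreal (1/2) * (\<integral>\<^sup>+ s. (\<Sum>m. ennreal (c m * (Aop (Suc m) W s)\<^sup>2)) \<partial>lborel)"
proof -
  have L0: "L \<ge> 0" and L1: "L \<ge> 1" using N NL by auto
  define I where "I = (LINT x|lborel. (psi L x)\<^sup>2)"
  have I1: "2 * L \<le> I" and I2: "I \<le> 2 * L + 2" unfolding I_def using psi_int_bounds[OF L0] by auto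
  have Ipos: "I > 0" using I1 L1 by simp
  define h where "h = sqrt (2 * K / I)"
  have h0: "h \<ge> 0" unfolding h_def using K Ipos by simp
  have hsq: "h\<^sup>2 = 2 * K / I" unfolding h_def using K Ipos by simp
  define W where "W x = h * psi L x" for x
  have intW: "(LINT x|lborel. (W x)\<^sup>2) = 2 * K"
  proof -
    have "(LINT x|lborel. (W x)\<^sup>2) = (LINT x|lborel. h\<^sup>2 * (psi L x)\<^sup>2)"
      unfolding W_def by (simp add: power_mult_distrib)
    also have "\<dots> = h\<^sup>2 * I" unfolding I_def by simp
    finally show ?thesis using hsq Ipos by simp
  qed
  have CK: "CK K W"
    unfolding CK_def Ccl_def
  proof (intro conjI exI[of _ "\<lambda>n. W"])
    show "W \<in> borel_measurable lborel" unfolding W_def[abs_def] by (rule psi_meas)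
    show "integrable lborel (\<lambda>x. (W x)\<^sup>2)" unfolding W_def by (rule psi_sq_int[OF L0])
    show "\<forall>n. C0 W" unfolding W_def[abs_def] using C0_psi[OF L0 h0] by simp
    show "(\<lambda>n. LINT x|lborel. (W x - W x)\<^sup>2) \<longlonglongrightarrow> 0" by simp
    show "1 / 2 * (LINT x|lborel. (W x)\<^sup>2) = K" using intW by simp
  qed
  define T where "T = (\<Sum>m<N. c m * (real (Suc m))\<^sup>2)"
  have T0: "T \<ge> 0" unfolding T_def using c by (simp add: sum_nonneg)
  define R where "R = L - real N / 2"
  have R0: "R \<ge> 0" unfolding R_def using NL by simp
  have pw: "ennreal (h\<^sup>2 * T) * indicator {-R..R} s \<le> (\<Sum>m. ennreal (c m * (Aop (Suc m) W s)\<^sup>2))" for s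
  proof (cases "s \<in> {-R..R}")
    case True
    then have sR: "\<bar>s\<bar> \<le> R" by auto
    have "ennreal (h\<^sup>2 * T) = (\<Sum>m<N. ennreal (c m * (Aop (Suc m) W s)\<^sup>2))"
    proof -
      have "Aop (Suc m) W s = h * real (Suc m)" if "m < N" for m
      proof -
        have "real (Suc m) \<le> real N" using that by simp
        then show ?thesis
          unfolding W_def[abs_def] using sR unfolding R_def
          by (intro Aop_plateau[OF L0]) (auto simp: field_simps)
      qed
      then have "(\<Sum>m<N. ennreal (c m * (Aop (Suc m) W s)\<^sup>2)) = (\<Sum>m<N. ennreal (c m * (h * real (Suc m))\<^sup>2))"
        by simp
      also have "\<dots> = ennreal (\<Sum>m<N. c m * (h * real (Suc m))\<^sup>2)"
        using c by (intro sum_ennreal) auto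
      also have "(\<Sum>m<N. c m * (h * real (Suc m))\<^sup>2) = h\<^sup>2 * T"
        unfolding T_def sum_distrib_left by (intro sum.cong refl) (simp add: power_mult_distrib)
      finally show ?thesis by simp
    qed
    also have "\<dots> \<le> (\<Sum>m. ennreal (c m * (Aop (Suc m) W s)\<^sup>2))"
      by (intro sum_le_suminf summableI) auto
    finally show ?thesis using True by simp
  qed simp
  have "ennreal (h\<^sup>2 * T) * ennreal (2 * R) = (\<integral>\<^sup>+ s. ennreal (h\<^sup>2 * T) * indicator {-R..R} s \<partial>lborel)"
    using R0 by (simp add: nn_integral_cmult emeasure_lborel_Icc)
  also have "\<dots> \<le> (\<integral>\<^sup>+ s. (\<Sum>m. ennreal (c m * (Aop (Suc m) W s)\<^sup>2)) \<partial>lborel)"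
    by (intro nn_integral_mono pw)
  finally have main: "ennreal (1/2) * ennreal (h\<^sup>2 * T * (2 * R)) \<le> ennreal (1/2) * (\<integral>\<^sup>+ s. (\<Sum>m. ennreal (c m * (Aop (Suc m) W s)\<^sup>2)) \<partial>lborel)"
    using T0 R0 by (intro mult_left_mono) (auto simp: ennreal_mult)
  have "ennreal (K * T * ((2 * L - real N) / (2 * L + 2))) \<le> ennreal (1/2) * ennreal (h\<^sup>2 * T * (2 * R))"
  proof -
    have "K * T * ((2 * L - real N) / (2 * L + 2)) \<le> K * T * ((2 * L - real N) / I)"
      using K T0 R0 Ipos I2 unfolding R_def
      by (intro mult_left_mono divide_left_mono) auto
    also have "\<dots> = 1/2 * (h\<^sup>2 * T * (2 * R))"
      unfolding hsq R_def using Ipos by (simp add: field_simps)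
    finally show ?thesis using R0 T0 by (subst ennreal_mult[symmetric]) (auto intro: ennreal_leI)
  qed
  with main CK show ?thesis unfolding T_def by (intro exI[of _ W]) auto
qed

lemma ratio_lim: "(\<lambda>n::nat. (2 * real n - real N) / (2 * real n + 2)) \<longlonglongrightarrow> 1"
  by real_asymp

theorem lemma2p8:
  fixes \<nu> K \<gamma> :: real
    and Phi Phi1 Phi2 Phi3 Phi4 :: "nat \<Rightarrow> real \<Rightarrow> real"
  assumes nu: "\<nu> > 0"
    and K: "0 < K" "K < \<nu>\<^sup>2 / 2"
    and gamma: "5/2 < \<gamma>" "\<gamma> < 3"
    and d1: "\<And>m x. m \<ge> 1 \<Longrightarrow> x \<ge> 0 \<Longrightarrow> (Phi m has_real_derivative Phi1 m x) (at x within {0..})"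
    and d2: "\<And>m x. m \<ge> 1 \<Longrightarrow> x \<ge> 0 \<Longrightarrow> (Phi1 m has_real_derivative Phi2 m x) (at x within {0..})"
    and d3: "\<And>m x. m \<ge> 1 \<Longrightarrow> x \<ge> 0 \<Longrightarrow> (Phi2 m has_real_derivative Phi3 m x) (at x within {0..})"
    and d4: "\<And>m x. m \<ge> 1 \<Longrightarrow> x \<ge> 0 \<Longrightarrow> (Phi3 m has_real_derivative Phi4 m x) (at x within {0..})"
    and c4: "\<And>m. m \<ge> 1 \<Longrightarrow> continuous_on {0..} (Phi4 m)"
    and signs: "\<And>m x. m \<ge> 1 \<Longrightarrow> x \<ge> 0 \<Longrightarrow>
       Phi m x \<ge> 0 \<and> Phi1 m x \<le> 0 \<and> Phi2 m x \<ge> 0 \<and> Phi3 m x \<le> 0 \<and> Phi4 m x \<ge> 0"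
    and strict: "\<And>x. x > 0 \<Longrightarrow>
       Phi 1 x > 0 \<and> Phi1 1 x < 0 \<and> Phi2 1 x > 0 \<and> Phi3 1 x < 0 \<and> Phi4 1 x > 0"
    and s1: "summable (\<lambda>m. Phi1 (Suc m) (\<nu> * real (Suc m) - sqrt (2 * K * real (Suc m))) * real (Suc m))"
    and s2: "summable (\<lambda>m. Phi2 (Suc m) (\<nu> * real (Suc m) - sqrt (2 * K * real (Suc m))) * (real (Suc m))\<^sup>2)"
    and s3: "summable (\<lambda>m. Phi2 (Suc m) (\<nu> * real (Suc m)) * real (Suc m) powr \<gamma>)"
    and s4: "summable (\<lambda>m. Phi3 (Suc m) (\<nu> * real (Suc m) - sqrt (2 * K * real (Suc m))) * real (Suc m) powr (3/2))"
  shows "(SUP W\<in>{W. CK K W}. Qfun \<nu> Phi2 W) =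
         (\<Sum>m. ennreal (Phi2 (Suc m) (\<nu> * real (Suc m)) * K * (real (Suc m))\<^sup>2))"
proof -
  define c where "c m = Phi2 (Suc m) (\<nu> * real (Suc m))" for m
  have c0: "\<And>m. c m \<ge> 0" unfolding c_def using signs nu by auto
  have Q: "\<And>W. Qfun \<nu> Phi2 W = ennreal (1/2) * (\<integral>\<^sup>+ s. (\<Sum>m. ennreal (c m * (Aop (Suc m) W s)\<^sup>2)) \<partial>lborel)"
    unfolding Qfun_def c_def ..
  have S: "(\<Sum>m. ennreal (Phi2 (Suc m) (\<nu> * real (Suc m)) * K * (real (Suc m))\<^sup>2))
      = (\<Sum>m. ennreal (c m * K * (real (Suc m))\<^sup>2))" unfolding c_def ..
  show ?thesis unfolding S
  proof (rule antisym)
    show "(SUP W\<in>{W. CK K W}. Qfun \<nu> Phi2 W) \<le> (\<Sum>m. ennreal (c m * K * (real (Suc m))\<^sup>2))"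
    proof (rule SUP_least)
      fix W assume "W \<in> {W. CK K W}"
      then have W: "W \<in> borel_measurable lborel" "integrable lborel (\<lambda>x. (W x)\<^sup>2)" "(LINT x|lborel. (W x)\<^sup>2) = 2 * K"
        unfolding CK_def Ccl_def by auto
      show "Qfun \<nu> Phi2 W \<le> (\<Sum>m. ennreal (c m * K * (real (Suc m))\<^sup>2))"
        unfolding Q using upper_bound[OF c0 W] K by simp
    qed
  next
    show "(\<Sum>m. ennreal (c m * K * (real (Suc m))\<^sup>2)) \<le> (SUP W\<in>{W. CK K W}. Qfun \<nu> Phi2 W)"
      unfolding suminf_eq_SUP
    proof (rule SUP_least)
      fix N :: nat
      let ?T = "\<Sum>m<N. c m * (real (Suc m))\<^sup>2"
      have "(\<Sum>m<N. ennreal (c m * K * (real (Suc m))\<^sup>2)) = ennreal (\<Sum>m<N. c m * K * (real (Suc m))\<^sup>2)"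
        using c0 K by (intro sum_ennreal) auto
      also have "(\<Sum>m<N. c m * K * (real (Suc m))\<^sup>2) = K * ?T"
        by (simp add: sum_distrib_left algebra_simps)
      also have "ennreal (K * ?T) \<le> (SUP W\<in>{W. CK K W}. Qfun \<nu> Phi2 W)"
      proof (cases "N = 0")
        case True then show ?thesis by simp
      next
        case False
        have lim: "(\<lambda>n. ennreal (K * ?T * ((2 * real n - real N) / (2 * real n + 2)))) \<longlonglongrightarrow> ennreal (K * ?T * 1)"
          by (intro tendsto_ennrealI tendsto_mult tendsto_const ratio_lim)
        show ?thesis
        proof (rule LIMSEQ_le_const2[OF lim[unfolded mult_1_right]], intro exI allI impI)
          fix n assume n: "n \<ge> N"
          obtain W where W: "CK K W"
            "ennreal (K * ?T * ((2 * real n - real N) / (2 * real n + 2)))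
               \<le> ennreal (1/2) * (\<integral>\<^sup>+ s. (\<Sum>m. ennreal (c m * (Aop (Suc m) W s)\<^sup>2)) \<partial>lborel)"
            using lower_W[of c K N "real n", OF c0 K(1)] False n by auto
          show "ennreal (K * ?T * ((2 * real n - real N) / (2 * real n + 2))) \<le> (SUP W\<in>{W. CK K W}. Qfun \<nu> Phi2 W)"
            using W by (intro SUP_upper2[of W]) (auto simp: Q)
        qed
      qed
      finally show "(\<Sum>m<N. ennreal (c m * K * (real (Suc m))\<^sup>2)) \<le> (SUP W\<in>{W. CK K W}. Qfun \<nu> Phi2 W)" .
    qed
  qed
qed

end
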